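(* Let $Q \ll P$ be probability measures on a Polish space $\Omega$ with $r = dQ/dP$, and let $\epsilon \in (0,1]$. Let $Q'$ be any probability distribution on $\Omega$ such that $D_{TV}(Q', Q) \le \epsilon$. Then $\exp_2 D_\infty(Q'\|P) \ge S_P^{-1}(\epsilon)$.
   Context: Define $w_P(h) = \mathbb{P}_{X\sim P}[r(X) \ge h]$, $W_P(h) = \int_0^h w_P(\eta)\,d\eta$ and $S_P(h) = 1 - W_P(h)$. $S_P$ is strictly decreasing on $[0, \|r\|_\infty]$ with $S_P(0) = 1$, $S_P(\|r\|_\infty) = 0$, and $S_P^{-1} : [0,1] \to [0, \|r\|_\infty]$ denotes its inverse there ($\|\cdot\|_\infty$ is the $P$-essential supremum). $D_\infty(Q'\|P) = \log_2 \|dQ'/dP\|_\infty$ if $Q' \ll P$ and $+\infty$ otherwise; $\exp_2(x) = 2^x$. $D_{TV}(Q',Q) = \sup_B |Q'(B) - Q(B)|$. *)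

theory Defs
  imports "HOL-Probability.Probability"
begin

definition rdens :: "'a measure \<Rightarrow> 'a measure \<Rightarrow> 'a \<Rightarrow> real" where
  "rdens P Q = (\<lambda>x. enn2real (RN_deriv P Q x))"

definition wP :: "'a measure \<Rightarrow> ('a \<Rightarrow> real) \<Rightarrow> real \<Rightarrow> real" where
  "wP P r h = measure P {x \<in> space P. r x \<ge> h}"

definition WP :: "'a measure \<Rightarrow> ('a \<Rightarrow> real) \<Rightarrow> real \<Rightarrow> real" where
  "WP P r h = (LBINT \<eta>=0..h. wP P r \<eta>)"

definition SP :: "'a measure \<Rightarrow> ('a \<Rightarrow> real) \<Rightarrow> real \<Rightarrow> real" where
  "SP P r h = 1 - WP P r h"

definition rsup :: "'a measure \<Rightarrow> ('a \<Rightarrow> real) \<Rightarrow> ereal" where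
  "rsup P r = esssup P (\<lambda>x. ereal (r x))"

definition SP_inv :: "'a measure \<Rightarrow> ('a \<Rightarrow> real) \<Rightarrow> real \<Rightarrow> real" where
  "SP_inv P r e = (THE h. 0 \<le> h \<and> ereal h \<le> rsup P r \<and> SP P r h = e)"

definition Dinf :: "'a measure \<Rightarrow> 'a measure \<Rightarrow> ereal" where
  "Dinf Q' P = (if absolutely_continuous P Q' then
      (case esssup P (\<lambda>x. enn2ereal (RN_deriv P Q' x)) of
         ereal t \<Rightarrow> ereal (log 2 t) | PInfty \<Rightarrow> \<infinity> | MInfty \<Rightarrow> -\<infinity>)
    else \<infinity>)"

definition exp2 :: "ereal \<Rightarrow> ereal" where
  "exp2 x = (case x of ereal t \<Rightarrow> ereal (2 powr t) | PInfty \<Rightarrow> \<infinity> | MInfty \<Rightarrow> 0)"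

definition DTV :: "'a measure \<Rightarrow> 'a measure \<Rightarrow> real" where
  "DTV Q' Q = (SUP B\<in>sets Q. \<bar>measure Q' B - measure Q B\<bar>)"

end

theory Submission imports Defs begin
lemma wP_antimono: "x \<le> y \<Longrightarrow> prob_space P \<Longrightarrow> r \<in> borel_measurable P \<Longrightarrow> wP P r y \<le> wP P r x"
  unfolding wP_def
  by (intro finite_measure.finite_measure_mono prob_space.finite_measure) auto

lemma wP_meas: assumes "prob_space P" "r \<in> borel_measurable P" shows "wP P r \<in> borel_measurable borel"
proof -
  have "mono (\<lambda>h. - wP P r h)" using wP_antimono[OF _ assms] by (auto simp: mono_def)
  then have "(\<lambda>h. - wP P r h) \<in> borel_measurable borel" by (rule borel_measurable_mono)
  then have "(\<lambda>h. - (- wP P r h)) \<in> borel_measurable borel" by measurable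
  then show ?thesis by simp
qed

lemma wP_bounds: "prob_space P \<Longrightarrow> 0 \<le> wP P r h \<and> wP P r h \<le> 1"
  unfolding wP_def by (simp add: prob_space.prob_le_1)

lemma WP_eq:
  assumes P: "prob_space P" and r[measurable]: "r \<in> borel_measurable P"
    and rnn: "\<And>x. x \<in> space P \<Longrightarrow> 0 \<le> r x" and M: "0 \<le> M"
  shows "WP P r M = (\<integral>x. min (r x) M \<partial>P)"
proof -
  interpret prob_space P by fact
  interpret pair_sigma_finite P lborel by unfold_locales
  have wm[measurable]: "wP P r \<in> borel_measurable borel" by (rule wP_meas[OF P r])
  have WI: "WP P r M = (LINT \<eta>:{0..M}|lborel. wP P r \<eta>)"
    unfolding WP_def using M interval_integral_Icc[of 0 M "wP P r"] by (simp add: zero_ereal_def)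
  have int1: "integrable lborel (\<lambda>\<eta>. indicator {0..M} \<eta> * wP P r \<eta>)"
  proof (rule Bochner_Integration.integrable_bound)
    show "integrable lborel (\<lambda>\<eta>. indicator {0..M} \<eta> :: real)" by (rule integrable_real_indicator) (use M in auto)
    show "(\<lambda>\<eta>. indicator {0..M} \<eta> * wP P r \<eta>) \<in> borel_measurable lborel" by measurable
    show "AE x in lborel. norm (indicator {0..M} x * wP P r x) \<le> norm (indicator {0..M} x :: real)"
      using wP_bounds[OF P] by (auto simp: indicator_def abs_le_iff)
  qed
  have A: "ennreal (LINT \<eta>:{0..M}|lborel. wP P r \<eta>) = (\<integral>\<^sup>+\<eta>. ennreal (indicator {0..M} \<eta> * wP P r \<eta>) \<partial>lborel)"
    unfolding set_lebesgue_integral_def real_scaleR_def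
    by (rule nn_integral_eq_integral[symmetric]) (use int1 wP_bounds[OF P] in auto)
  define f where "f x \<eta> = (if 0 \<le> \<eta> \<and> \<eta> \<le> M \<and> \<eta> \<le> r x then 1 else 0 :: ennreal)" for x \<eta>
  have fm: "case_prod f \<in> borel_measurable (P \<Otimes>\<^sub>M lborel)"
    unfolding f_def by measurable
  have B: "(\<integral>\<^sup>+\<eta>. ennreal (indicator {0..M} \<eta> * wP P r \<eta>) \<partial>lborel) = (\<integral>\<^sup>+\<eta>. (\<integral>\<^sup>+x. f x \<eta> \<partial>P) \<partial>lborel)"
  proof (rule nn_integral_cong)
    fix \<eta> :: real
    have "(\<integral>\<^sup>+x. f x \<eta> \<partial>P) = (\<integral>\<^sup>+x. indicator {0..M} \<eta> * indicator {x\<in>space P. \<eta> \<le> r x} x \<partial>P)"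
      by (rule nn_integral_cong) (auto simp: f_def indicator_def)
    also have "\<dots> = indicator {0..M} \<eta> * emeasure P {x\<in>space P. \<eta> \<le> r x}"
      by (subst nn_integral_cmult) auto
    also have "\<dots> = ennreal (indicator {0..M} \<eta> * wP P r \<eta>)"
      by (simp add: wP_def emeasure_eq_measure indicator_def)
    finally show "ennreal (indicator {0..M} \<eta> * wP P r \<eta>) = (\<integral>\<^sup>+x. f x \<eta> \<partial>P)" by simp
  qed
  have C: "(\<integral>\<^sup>+\<eta>. (\<integral>\<^sup>+x. f x \<eta> \<partial>P) \<partial>lborel) = (\<integral>\<^sup>+x. (\<integral>\<^sup>+\<eta>. f x \<eta> \<partial>lborel) \<partial>P)"
    by (rule Fubini'[OF fm])
  have D: "(\<integral>\<^sup>+x. (\<integral>\<^sup>+\<eta>. f x \<eta> \<partial>lborel) \<partial>P) = (\<integral>\<^sup>+x. ennreal (min (r x) M) \<partial>P)"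
  proof (rule nn_integral_cong)
    fix x assume x: "x \<in> space P"
    have "(\<integral>\<^sup>+\<eta>. f x \<eta> \<partial>lborel) = (\<integral>\<^sup>+\<eta>. indicator {0..min (r x) M} \<eta> \<partial>lborel)"
      by (rule nn_integral_cong) (auto simp: f_def indicator_def)
    also have "\<dots> = ennreal (min (r x) M)" using rnn[OF x] M by simp
    finally show "(\<integral>\<^sup>+\<eta>. f x \<eta> \<partial>lborel) = ennreal (min (r x) M)" .
  qed
  have int2: "integrable P (\<lambda>x. min (r x) M)"
    by (rule integrable_const_bound[where B=M]) (use rnn M in auto)
  have E: "(\<integral>\<^sup>+x. ennreal (min (r x) M) \<partial>P) = ennreal (\<integral>x. min (r x) M \<partial>P)"
    by (rule nn_integral_eq_integral) (use int2 rnn M in auto)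
  have "ennreal (WP P r M) = ennreal (\<integral>x. min (r x) M \<partial>P)"
    using WI A B C D E by simp
  moreover have "0 \<le> WP P r M" unfolding WI set_lebesgue_integral_def
    by (rule integral_nonneg_AE) (use wP_bounds[OF P] in auto)
  moreover have "0 \<le> (\<integral>x. min (r x) M \<partial>P)"
    by (rule integral_nonneg_AE) (use rnn M in auto)
  ultimately show ?thesis by simp
qed

locale lc =
  fixes P :: "'a measure" and r :: "'a \<Rightarrow> real"
  assumes P: "prob_space P" and rm[measurable]: "r \<in> borel_measurable P"
    and rnn: "\<And>x. 0 \<le> r x" and rint: "integrable P r" and r1: "integral\<^sup>L P r = 1"
begin

lemma intmin: "integrable P (\<lambda>x. min (r x) M)" if "0 \<le> M"
proof -
  interpret prob_space P by (rule P)
  show ?thesis by (rule integrable_const_bound[where B=M]) (use rnn that in auto)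
qed

lemma SP_eq: "SP P r M = (\<integral>x. r x - min (r x) M \<partial>P)" if M: "0 \<le> M"
  unfolding SP_def WP_eq[OF P rm rnn M] using intmin[OF M] rint r1
  by (subst Bochner_Integration.integral_diff) auto

lemma SP_diff: "SP P r a - SP P r b = (\<integral>x. min (r x) b - min (r x) a \<partial>P)"
  if "0 \<le> a" "0 \<le> b"
  using that intmin[of a] intmin[of b]
  by (simp add: SP_def WP_eq[OF P rm rnn] Bochner_Integration.integral_diff)

lemma SP_lip: "\<bar>SP P r a - SP P r b\<bar> \<le> \<bar>a - b\<bar>" if "0 \<le> a" "0 \<le> b"
proof -
  interpret prob_space P by (rule P)
  have i: "integrable P (\<lambda>x. min (r x) b - min (r x) a)" using intmin that by auto
  have "(\<integral>x. min (r x) b - min (r x) a \<partial>P) \<le> (\<integral>x. \<bar>a - b\<bar> \<partial>P)"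
    by (rule integral_mono[OF i]) auto
  moreover have "(\<integral>x. - \<bar>a - b\<bar> \<partial>P) \<le> (\<integral>x. min (r x) b - min (r x) a \<partial>P)"
    by (rule integral_mono[OF _ i]) auto
  ultimately show ?thesis using SP_diff[OF that] by (simp add: prob_space)
qed

lemma SP_cont: "continuous_on {0..n} (SP P r)"
proof (rule lipschitz_on_continuous_on[where L=1], rule lipschitz_onI)
  fix x y assume "x \<in> {0..n}" "y \<in> {0..n}"
  then show "dist (SP P r x) (SP P r y) \<le> 1 * dist x y"
    using SP_lip[of x y] by (simp add: dist_real_def)
qed simp

lemma SP_0: "SP P r 0 = 1"
proof -
  have "(\<lambda>x. r x - min (r x) 0) = r" using rnn by (auto simp: fun_eq_iff min_def intro: antisym)
  then show ?thesis using SP_eq[of 0] r1 by simp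
qed

lemma rsup_nonneg: "0 \<le> rsup P r"
proof -
  interpret prob_space P by (rule P)
  have "esssup P (\<lambda>x. ereal 0) \<le> rsup P r" unfolding rsup_def
    by (rule esssup_mono) (auto simp: rnn)
  moreover have "esssup P (\<lambda>x. ereal 0) = ereal 0" by (rule esssup_const) (simp add: emeasure_space_1)
  ultimately show ?thesis by (simp add: zero_ereal_def)
qed

lemma SP_strict: "SP P r b < SP P r a" if ab: "0 \<le> a" "a < b" "ereal b \<le> rsup P r"
proof -
  interpret prob_space P by (rule P)
  have i: "integrable P (\<lambda>x. min (r x) b - min (r x) a)" using intmin that by auto
  have nn: "AE x in P. 0 \<le> min (r x) b - min (r x) a" using ab by auto
  have "(\<integral>x. min (r x) b - min (r x) a \<partial>P) \<noteq> 0"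
  proof
    assume "(\<integral>x. min (r x) b - min (r x) a \<partial>P) = 0"
    then have "AE x in P. min (r x) b - min (r x) a = 0"
      using integral_nonneg_eq_0_iff_AE[OF i nn] by simp
    then have "AE x in P. ereal (r x) \<le> ereal a"
      by eventually_elim (use ab in \<open>auto simp: min_def split: if_splits\<close>)
    then have "rsup P r \<le> ereal a" unfolding rsup_def by (intro esssup_I) auto
    from order_trans[OF ab(3) this] ab show False by simp
  qed
  moreover have "0 \<le> (\<integral>x. min (r x) b - min (r x) a \<partial>P)"
    by (rule integral_nonneg_AE[OF nn])
  ultimately show ?thesis using SP_diff[of a b] ab by linarith
qed

lemma SP_small: "\<exists>b\<ge>0. ereal b \<le> rsup P r \<and> SP P r b \<le> e" if e: "0 < e"
proof (cases "rsup P r")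
  case (real R)
  interpret prob_space P by (rule P)
  have R0: "0 \<le> R" using rsup_nonneg real by simp
  have "AE x in P. ereal (r x) \<le> ereal R" using esssup_AE[of "\<lambda>x. ereal (r x)" P] real
    unfolding rsup_def by simp
  then have "AE x in P. r x - min (r x) R = 0" by eventually_elim auto
  then have "(\<integral>x. r x - min (r x) R \<partial>P) = (\<integral>x. 0 \<partial>P)" by (intro integral_cong_AE) auto
  then have "SP P r R = 0" unfolding SP_eq[OF R0] by simp
  then show ?thesis using R0 real e by (intro exI[of _ R]) auto
next
  case PInf
  interpret prob_space P by (rule P)
  have "(\<lambda>n. \<integral>x. r x - min (r x) (real n) \<partial>P) \<longlonglongrightarrow> (\<integral>x. 0 \<partial>P)"
  proof (rule integral_dominated_convergence[where w=r])
    show "AE x in P. (\<lambda>n. r x - min (r x) (real n)) \<longlonglongrightarrow> 0"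
    proof (rule AE_I2)
      fix x
      have "eventually (\<lambda>n. r x - min (r x) (real n) = 0) sequentially"
        unfolding eventually_sequentially
        by (rule exI[of _ "nat \<lceil>r x\<rceil>"]) (auto simp: min_def dest!: nat_ceiling_le_eq[THEN iffD1])
      then show "(\<lambda>n. r x - min (r x) (real n)) \<longlonglongrightarrow> 0" by (rule tendsto_eventually)
    qed
    show "\<And>n. AE x in P. norm (r x - min (r x) (real n)) \<le> r x" using rnn by auto
  qed (auto simp: rint)
  then have "(\<lambda>n. SP P r (real n)) \<longlonglongrightarrow> 0" by (simp add: SP_eq)
  from order_tendstoD(2)[OF this e] obtain n where "SP P r (real n) < e"
    by (auto simp: eventually_sequentially)
  then show ?thesis using PInf by (intro exI[of _ "real n"]) auto
next
  case MInf then show ?thesis using rsup_nonneg by simp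
qed

lemma SP_inv_prop:
  assumes e: "0 < e" "e \<le> 1"
  shows "0 \<le> SP_inv P r e \<and> ereal (SP_inv P r e) \<le> rsup P r \<and> SP P r (SP_inv P r e) = e"
proof -
  obtain b where b: "0 \<le> b" "ereal b \<le> rsup P r" "SP P r b \<le> e" using SP_small[OF e(1)] by blast
  obtain h where h: "0 \<le> h" "h \<le> b" "SP P r h = e"
    using IVT2'[of "SP P r" b e 0] b e SP_0 SP_cont[of b] by auto
  have ex: "0 \<le> h \<and> ereal h \<le> rsup P r \<and> SP P r h = e" using h b order_trans[of "ereal h" "ereal b" "rsup P r"] by auto
  have un: "h' = h" if "0 \<le> h' \<and> ereal h' \<le> rsup P r \<and> SP P r h' = e" for h'
  proof (rule ccontr)
    assume "h' \<noteq> h"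
    then consider "h' < h" | "h < h'" by linarith
    then show False
    proof cases
      case 1 then show ?thesis using SP_strict[of h' h] ex that by simp
    next
      case 2 then show ?thesis using SP_strict[of h h'] ex that by simp
    qed
  qed
  have "SP_inv P r e = h" unfolding SP_inv_def
    using the_equality[of "\<lambda>h. 0 \<le> h \<and> ereal h \<le> rsup P r \<and> SP P r h = e" h, OF ex un] .
  then show ?thesis using ex by simp
qed

end

theorem lemma1:
  fixes P Q Q' :: "'a::polish_space measure" and \<epsilon> :: real
  assumes "prob_space P" and "prob_space Q" and "prob_space Q'"
    and "sets P = sets borel" and "sets Q = sets borel" and "sets Q' = sets borel"
    and "absolutely_continuous P Q"
    and "0 < \<epsilon>" and "\<epsilon> \<le> 1"
    and "DTV Q' Q \<le> \<epsilon>"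
  shows "exp2 (Dinf Q' P) \<ge> ereal (SP_inv P (rdens P Q) \<epsilon>)"
proof -
  interpret P: prob_space P by fact
  interpret Q: prob_space Q by fact
  interpret Q': prob_space Q' by fact
  have sQ: "sets Q = sets P" and sQ': "sets Q' = sets P" using assms by auto
  have spQ: "space Q = space P" and spQ': "space Q' = space P" using sets_eq_imp_space_eq sQ sQ' by auto
  define r where "r = rdens P Q"
  have rm[measurable]: "r \<in> borel_measurable P" unfolding r_def rdens_def by measurable
  have rnn: "\<And>x. 0 \<le> r x" unfolding r_def rdens_def by simp
  have Qd: "density P (RN_deriv P Q) = Q" by (rule P.density_RN_deriv[OF assms(7) sQ])
  have fin: "AE x in P. RN_deriv P Q x \<noteq> \<infinity>"
    by (rule P.RN_deriv_finite[OF Q.sigma_finite_measure_axioms assms(7) sQ])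
  have "density P (RN_deriv P Q) = density P (\<lambda>x. ennreal (r x))"
    unfolding r_def rdens_def
  proof (rule density_cong)
    show "AE x in P. RN_deriv P Q x = ennreal (enn2real (RN_deriv P Q x))"
      using fin by eventually_elim (simp add: less_top)
  qed measurable
  then have Qr: "Q = density P (\<lambda>x. ennreal (r x))" using Qd by simp
  have "emeasure Q (space P) = (\<integral>\<^sup>+x. ennreal (r x) * indicator (space P) x \<partial>P)"
    unfolding Qr by (rule emeasure_density) auto
  also have "\<dots> = (\<integral>\<^sup>+x. ennreal (r x) \<partial>P)" by (rule nn_integral_cong) auto
  finally have "(\<integral>\<^sup>+x. ennreal (r x) \<partial>P) = ennreal 1"
    using Q.emeasure_space_1 spQ by simp
  then have ri: "integrable P r \<and> integral\<^sup>L P r = 1"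
    using nn_integral_eq_integrable[of r P 1] rnn by auto
  interpret lc P r using assms(1) rnn ri by unfold_locales auto
  define h where "h = SP_inv P r \<epsilon>"
  have hp: "0 \<le> h" "ereal h \<le> rsup P r" "SP P r h = \<epsilon>"
    using SP_inv_prop[OF assms(8,9)] unfolding h_def by auto
  show ?thesis
  proof (cases "absolutely_continuous P Q'")
    case False
    then show ?thesis by (simp add: Dinf_def exp2_def)
  next
    case ac: True
    define g where "g = RN_deriv P Q'"
    have gm[measurable]: "g \<in> borel_measurable P" unfolding g_def by measurable
    have Q'd: "density P g = Q'" unfolding g_def by (rule P.density_RN_deriv[OF ac sQ'])
    define E where "E = esssup P (\<lambda>x. enn2ereal (g x))"
    have E0: "0 \<le> E"
    proof -
      have "esssup P (\<lambda>x. ereal 0) \<le> E" unfolding E_def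
        by (rule esssup_mono) (auto simp: zero_ereal_def[symmetric])
      moreover have "esssup P (\<lambda>x. ereal 0) = ereal 0" by (rule esssup_const) (simp add: P.emeasure_space_1)
      ultimately show ?thesis by (simp add: zero_ereal_def)
    qed
    show ?thesis
    proof (cases E)
      case PInf
      then show ?thesis using ac by (simp add: Dinf_def exp2_def E_def g_def)
    next
      case MInf
      then show ?thesis using E0 by simp
    next
      case (real t)
      have t0: "0 \<le> t" using E0 real by simp
      have gAE: "AE x in P. g x \<le> ennreal t"
      proof -
        have "AE x in P. enn2ereal (g x) \<le> E" unfolding E_def by (rule esssup_AE)
        then show ?thesis
        proof eventually_elim
          fix x assume "enn2ereal (g x) \<le> E"
          then show "g x \<le> ennreal t" using real t0 by (simp add: less_eq_ennreal.rep_eq)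
        qed
      qed
      have Q'eq: "emeasure Q' A = (\<integral>\<^sup>+x. g x * indicator A x \<partial>P)" if "A \<in> sets P" for A
        unfolding Q'd[symmetric] by (rule emeasure_density) (use that in auto)
      have tpos: "0 < t"
      proof (rule ccontr)
        assume nt: "\<not> 0 < t"
        have "AE x in P. g x * indicator (space P) x = 0" using gAE
          by eventually_elim (use t0 nt in auto)
        then have "emeasure Q' (space P) = 0" using Q'eq[of "space P"] by (simp add: nn_integral_cong_AE)
        then show False using Q'.emeasure_space_1 spQ' by simp
      qed
      have ex: "exp2 (Dinf Q' P) = ereal t"
        using ac real tpos by (simp add: Dinf_def exp2_def E_def g_def)
      have "h \<le> t"
      proof (rule ccontr)
        assume "\<not> h \<le> t"
        then have "SP P r h < SP P r t" using SP_strict[of t h] hp t0 by simp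
        then have lt: "\<epsilon> < SP P r t" using hp by simp
        define B where "B = {x \<in> space P. t < r x}"
        have Bs[measurable]: "B \<in> sets P" unfolding B_def by measurable
        have intB: "integrable P (\<lambda>x. indicator B x * r x)"
          using integrable_mult_indicator[OF Bs, of r] ri by (simp add: real_scaleR_def)
        have QB: "measure Q B = (\<integral>x. indicator B x * r x \<partial>P)"
        proof -
          have "measure Q B = (\<integral>x. indicator B x \<partial>Q)" using Bs sQ spQ
            by (simp add: Int_absorb2 sets.sets_into_space)
          also have "\<dots> = (\<integral>x. r x *\<^sub>R indicator B x \<partial>P)" unfolding Qr
            by (rule integral_density) (auto simp: rnn)
          finally show ?thesis by (simp add: mult.commute)
        qed
        have Q'B: "measure Q' B \<le> t * measure P B"
        proof -
          have "emeasure Q' B = (\<integral>\<^sup>+x. g x * indicator B x \<partial>P)" by (rule Q'eq[OF Bs])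
          also have "\<dots> \<le> (\<integral>\<^sup>+x. ennreal t * indicator B x \<partial>P)"
            by (rule nn_integral_mono_AE) (use gAE in \<open>auto elim!: eventually_mono simp: indicator_def\<close>)
          also have "\<dots> = ennreal t * emeasure P B" by (simp add: nn_integral_cmult)
          finally have "ennreal (measure Q' B) \<le> ennreal (t * measure P B)"
            using t0 by (simp add: Q'.emeasure_eq_measure P.emeasure_eq_measure ennreal_mult)
          then show ?thesis using t0 by (simp add: ennreal_le_iff)
        qed
        have "SP P r t = (\<integral>x. indicator B x * r x - t * indicator B x \<partial>P)"
          unfolding SP_eq[OF t0] by (rule Bochner_Integration.integral_cong) (auto simp: B_def indicator_def)
        also have "\<dots> = measure Q B - t * measure P B"
        proof -
          have "integrable P (\<lambda>x. t * indicator B x)" using Bs by (simp add: P.emeasure_eq_measure)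
          then show ?thesis using intB Bs
            by (simp add: QB Bochner_Integration.integral_diff)
        qed
        also have "\<dots> \<le> measure Q B - measure Q' B" using Q'B by simp
        also have "\<dots> \<le> \<bar>measure Q' B - measure Q B\<bar>" by simp
        also have "\<dots> \<le> DTV Q' Q" unfolding DTV_def
        proof (rule cSUP_upper)
          show "B \<in> sets Q" using Bs sQ by simp
          show "bdd_above ((\<lambda>B. \<bar>measure Q' B - measure Q B\<bar>) ` sets Q)"
          proof (rule bdd_aboveI[where M=1], clarify)
            fix A
            have "measure Q' A \<le> 1" "measure Q A \<le> 1" "0 \<le> measure Q' A" "0 \<le> measure Q A"
              using Q'.prob_le_1 Q.prob_le_1 measure_nonneg by auto
            then show "\<bar>measure Q' A - measure Q A\<bar> \<le> 1" by arith
          qed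
        qed
        finally show False using lt assms(10) by simp
      qed
      then show ?thesis using ex h_def r_def by simp
    qed
  qed
qed
end
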